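(* Let $n\ge2$ and $k\ge1$ be integers. For every real polynomial $f\in M_{n,k}$ with $\deg f\le 2k$, one has $f(1)/f_0\le\binom{n+k-1}{k}$. That is, the lower bound $\mathcal{M}(n,k)\ge\binom{n+k-1}{k}$ cannot be improved via the bound $\mathcal{M}(n,k)\ge f(1)/f_0$ (valid for $f\in M_{n,k}$) using any polynomial of degree at most $2k$.
   Context: For $n\ge 2$, let $P_i^{(n)}(t)$ be the normalized Gegenbauer polynomials: $P_0^{(n)}=1$, $P_1^{(n)}=t$, and $(i+n-2)P_{i+1}^{(n)}(t)=(2i+n-2)tP_i^{(n)}(t)-iP_{i-1}^{(n)}(t)$ for $i\ge1$. For a real polynomial $f$ of degree $m$, write $f(t)=\sum_{i=0}^m f_iP_i^{(n)}(t)$. Let $F_{n,k}$ be the set of $f$ with $f_0>0$ and $f_i\le0$ for $i=1,3,\dots,2k-1$ and for all $i\ge2k+1$. Let $M_{n,k}=\{f\in F_{n,k}: f(t)\ge0$ for all $t\in[-1,1]\}$. A $(k,k)$-design is a finite nonempty $C\subset\mathbb{S}^{n-1}$ with $\sum_{x,y\in C}P_{2i}^{(n)}(\langle x,y\rangle)=0$ for $i=1,\dots,k$. $\mathcal{M}(n,k)$ is the minimum cardinality of such a design. *)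

theory Defs
  imports "HOL-Computational_Algebra.Polynomial"
begin

fun gegen :: "nat \<Rightarrow> nat \<Rightarrow> real poly" where
  "gegen n 0 = 1"
| "gegen n (Suc 0) = [:0, 1:]"
| "gegen n (Suc (Suc i)) =
     smult (1 / (real (Suc i) + real n - 2))
       (smult (2 * real (Suc i) + real n - 2) ([:0, 1:] * gegen n (Suc i))
        - smult (real (Suc i)) (gegen n i))"

definition gegen_sum :: "nat \<Rightarrow> nat \<Rightarrow> (nat \<Rightarrow> real) \<Rightarrow> real poly" where
  "gegen_sum n m c = (\<Sum>i\<le>m. smult (c i) (gegen n i))"

definition in_F :: "nat \<Rightarrow> nat \<Rightarrow> nat \<Rightarrow> (nat \<Rightarrow> real) \<Rightarrow> bool" where
  "in_F n k m c \<longleftrightarrow> c 0 > 0 \<and>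
     (\<forall>i\<le>m. (odd i \<and> i \<le> 2*k - 1 \<longrightarrow> c i \<le> 0) \<and> (2*k + 1 \<le> i \<longrightarrow> c i \<le> 0))"

definition in_M :: "nat \<Rightarrow> nat \<Rightarrow> nat \<Rightarrow> (nat \<Rightarrow> real) \<Rightarrow> bool" where
  "in_M n k m c \<longleftrightarrow> in_F n k m c \<and> (\<forall>t\<in>{-1..1}. poly (gegen_sum n m c) t \<ge> 0)"

end

theory Submission
  imports Defs "HOL-Analysis.Convex"
begin


abbreviation "PX \<equiv> [:0, 1::real:]"

lemma gegen_rec:
  assumes "n \<ge> 2" "i \<ge> 1"
  shows "smult (real i + real n - 2) (gegen n (Suc i)) =
         smult (2 * real i + real n - 2) (PX * gegen n i) - smult (real i) (gegen n (i - 1))"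
proof -
  obtain j where j: "i = Suc j" using assms by (cases i) auto
  have pos: "real i + real n - 2 \<noteq> 0" using assms by auto
  show ?thesis using pos unfolding j by simp
qed

lemma gegen_at1: "n \<ge> 2 \<Longrightarrow> poly (gegen n i) 1 = 1"
  by (induction n i rule: gegen.induct) (auto simp: field_simps)

lemma gegen_neg: "n \<ge> 2 \<Longrightarrow> poly (gegen n i) (-x) = (-1)^i * poly (gegen n i) x"
  by (induction n i rule: gegen.induct) (auto simp: field_simps)



lemma gegen_deg_lc:
  assumes "n \<ge> 2"
  shows "degree (gegen n i) = i \<and> coeff (gegen n i) i > 0"
  using assms
proof (induction n i rule: gegen.induct)
  case (1 n) then show ?case by simp
next
  case (2 n) then show ?case by simp
next
  case (3 n i)
  let ?c = "1 / (real (Suc i) + real n - 2)"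
  let ?a = "2 * real (Suc i) + real n - 2"
  have IH1: "degree (gegen n (Suc i)) = Suc i" "coeff (gegen n (Suc i)) (Suc i) > 0" using 3 by auto
  have IH0: "degree (gegen n i) = i" using 3 by auto
  have d1: "degree (PX * gegen n (Suc i)) \<le> Suc (Suc i)"
    using degree_mult_le[of PX "gegen n (Suc i)"] IH1 by simp
  have e1: "degree (smult ?a (PX * gegen n (Suc i))) \<le> Suc (Suc i)"
    using degree_smult_le[of ?a "PX * gegen n (Suc i)"] d1 by linarith
  have e2: "degree (smult (real (Suc i)) (gegen n i)) \<le> Suc (Suc i)"
    using degree_smult_le[of "real (Suc i)" "gegen n i"] IH0 by linarith
  have e3: "degree (smult ?a (PX * gegen n (Suc i)) - smult (real (Suc i)) (gegen n i)) \<le> Suc (Suc i)"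
    using degree_diff_le[OF e1 e2] .
  have "degree (gegen n (Suc (Suc i))) \<le> Suc (Suc i)"
    unfolding gegen.simps using degree_smult_le order.trans e3 by blast
  moreover have cf: "coeff (gegen n (Suc (Suc i))) (Suc (Suc i)) = ?c * (?a * coeff (gegen n (Suc i)) (Suc i))"
    using IH0 by (simp add: coeff_eq_0)
  moreover have "?c * (?a * coeff (gegen n (Suc i)) (Suc i)) > 0"
    using IH1 3(3) by (intro mult_pos_pos) auto
  ultimately show ?case
    by (metis le_antisym le_degree less_irrefl)
qed



lemma gegen_rec_prev:
  assumes "n \<ge> 2"
  shows "smult (real i) (gegen n (i - 1)) =
         smult (2 * real i + real n - 2) (PX * gegen n i) - smult (real i + real n - 2) (gegen n (Suc i))"
proof (cases "i = 0")
  case True then show ?thesis by (simp add: algebra_simps)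
next
  case False
  then show ?thesis using gegen_rec[OF assms, of i] by (simp add: algebra_simps)
qed

lemma gegen_R1:
  assumes "n \<ge> 2"
  shows "[:1,0,-1:] * pderiv (gegen n i) = smult (real i) (gegen n (i - 1) - PX * gegen n i)"
  using assms
proof (induction n i rule: gegen.induct)
  case (1 n) then show ?case by simp
next
  case (2 n) then show ?case by (simp add: pderiv_pCons) (simp add: poly_eq_iff coeff_pCons split: nat.split)
next
  case (3 n i)
  define j where "j = Suc i"
  have n2: "n \<ge> 2" by fact
  have IHj: "[:1,0,-1:] * pderiv (gegen n j) = smult (real j) (gegen n i - PX * gegen n j)"
    using 3 unfolding j_def by simp
  have IHi: "[:1,0,-1:] * pderiv (gegen n i) = smult (real i) (gegen n (i - 1) - PX * gegen n i)"
    using 3 by simp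
  have rec: "smult (real j + real n - 2) (gegen n (Suc j)) =
         smult (2 * real j + real n - 2) (PX * gegen n j) - smult (real j) (gegen n i)"
    using gegen_rec[OF n2, of j] unfolding j_def by simp
  have recd: "smult (real j + real n - 2) (pderiv (gegen n (Suc j))) =
         smult (2 * real j + real n - 2) (gegen n j + PX * pderiv (gegen n j)) - smult (real j) (pderiv (gegen n i))"
    using arg_cong[OF rec, of pderiv]
    by (simp add: pderiv_smult pderiv_diff pderiv_mult pderiv_pCons algebra_simps smult_add_right)
  have rp: "smult (real i) (gegen n (i - 1)) =
         smult (2 * real i + real n - 2) (PX * gegen n i) - smult (real i + real n - 2) (gegen n j)"
    using gegen_rec_prev[OF n2, of i] unfolding j_def by simp
  show ?case
  proof (rule iffD1[OF poly_eq_poly_eq_iff], rule ext)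
    fix x :: real
    define a where "a = poly (gegen n i) x"
    define b where "b = poly (gegen n j) x"
    define c where "c = poly (gegen n (Suc j)) x"
    define a' where "a' = poly (pderiv (gegen n i)) x"
    define b' where "b' = poly (pderiv (gegen n j)) x"
    define c' where "c' = poly (pderiv (gegen n (Suc j))) x"
    define e where "e = poly (gegen n (i - 1)) x"
    have h1: "(real j + real n - 2) * c = (2 * real j + real n - 2) * x * b - real j * a"
      using arg_cong[OF rec, of "\<lambda>p. poly p x"] unfolding a_def b_def c_def by simp
    have h2: "(real j + real n - 2) * c' = (2 * real j + real n - 2) * (b + x * b') - real j * a'"
      using arg_cong[OF recd, of "\<lambda>p. poly p x"] unfolding a'_def b_def b'_def c'_def by simp
    have h3: "(1 - x^2) * b' = real j * (a - x * b)"
      using arg_cong[OF IHj, of "\<lambda>p. poly p x"] unfolding a_def b_def b'_def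
      by (simp add: algebra_simps power2_eq_square)
    have h4: "(1 - x^2) * a' = real i * (e - x * a)"
      using arg_cong[OF IHi, of "\<lambda>p. poly p x"] unfolding a_def e_def a'_def
      by (simp add: algebra_simps power2_eq_square)
    have h5: "real i * e = (2 * real i + real n - 2) * x * a - (real i + real n - 2) * b"
      using arg_cong[OF rp, of "\<lambda>p. poly p x"] unfolding a_def b_def e_def by simp
    have jn: "real j + real n - 2 > 0" using n2 unfolding j_def by simp
    have ij: "real j = real i + 1" unfolding j_def by simp
    have "(real j + real n - 2) * ((1 - x^2) * c') = (real j + real n - 2) * ((real j + 1) * (b - x * c))"
    proof -
      have "(real j + real n - 2) * ((1 - x^2) * c') = (1 - x^2) * ((real j + real n - 2) * c')" by simp
      also have "\<dots> = (2 * real j + real n - 2) * ((1 - x^2) * b + x * ((1-x^2) * b')) - real j * ((1-x^2) * a')"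
        by (subst h2) (simp add: algebra_simps)
      also have "\<dots> = (2 * real j + real n - 2) * ((1 - x^2) * b + x * (real j * (a - x * b))) - real j * (real i * e - real i * x * a)"
        by (simp only: h3 h4) (simp add: algebra_simps)
      also have "\<dots> = (2 * real j + real n - 2) * ((1 - x^2) * b + x * (real j * (a - x * b))) - real j * ((2 * real i + real n - 2) * x * a - (real i + real n - 2) * b - real i * x * a)"
        by (subst h5) (rule refl)
      also have "\<dots> = (real j + 1) * ((real j + real n - 2) * b - x * ((real j + real n - 2) * c))"
        by (subst h1) (simp add: ij algebra_simps power2_eq_square)
      finally show ?thesis by (simp add: algebra_simps)
    qed
    then have "(1 - x^2) * c' = (real j + 1) * (b - x * c)" using jn by simp
    then show "poly ([:1,0,-1:] * pderiv (gegen n (Suc (Suc i)))) x =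
          poly (smult (real (Suc (Suc i))) (gegen n (Suc (Suc i) - 1) - PX * gegen n (Suc (Suc i)))) x"
      unfolding b_def c_def c'_def j_def by (simp add: algebra_simps power2_eq_square)
  qed
qed



definition mu :: "nat \<Rightarrow> nat \<Rightarrow> real" where
  "mu n j = (if even j then (\<Prod>m<j div 2. (2 * real m + 1) / (real n + 2 * real m)) else 0)"

definition Lf :: "nat \<Rightarrow> real poly \<Rightarrow> real" where
  "Lf n p = (\<Sum>j\<le>degree p. coeff p j * mu n j)"

lemma mu_0[simp]: "mu n 0 = 1" by (simp add: mu_def)
lemma mu_odd: "odd j \<Longrightarrow> mu n j = 0" by (simp add: mu_def)
lemma mu_1[simp]: "mu n 1 = 0" by (simp add: mu_def)
lemma mu_Suc0[simp]: "mu n (Suc 0) = 0" by (simp add: mu_def)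
lemma mu_2: "mu n 2 = 1 / real n" by (simp add: mu_def)

lemma mu_rec:
  assumes "n \<ge> 1"
  shows "(real n + real j) * mu n (Suc (Suc j)) = (real j + 1) * mu n j"
proof (cases "even j")
  case True
  then obtain l where l: "j = 2 * l" by blast
  have "Suc (Suc j) div 2 = Suc l" using l by simp
  then show ?thesis using l assms by (simp add: mu_def field_simps)
next
  case False then show ?thesis by (simp add: mu_def)
qed

lemma mu_shift:
  assumes "n \<ge> 1"
  shows "(real n + real j) * mu (n + 2) j = real n * mu n j"
proof (cases "even j")
  case True
  then obtain l where l: "j = 2 * l" by blast
  have "(real n + 2 * real l) * (\<Prod>m<l. (2 * real m + 1) / (real (n+2) + 2 * real m))
        = real n * (\<Prod>m<l. (2 * real m + 1) / (real n + 2 * real m))"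
  proof (induction l)
    case 0 then show ?case by simp
  next
    case (Suc l)
    have p1: "real n + 2 * real l > 0" "real n + 2 * real l + 2 > 0" using assms by auto
    have "(real n + 2 * real (Suc l)) * (\<Prod>m<Suc l. (2 * real m + 1) / (real (n+2) + 2 * real m))
       = ((real n + 2 * real l) * (\<Prod>m<l. (2 * real m + 1) / (real (n+2) + 2 * real m))) * (2 * real l + 1) / (real n + 2 * real l)"
      using p1 by (simp add: field_simps)
    also have "\<dots> = real n * (\<Prod>m<l. (2 * real m + 1) / (real n + 2 * real m)) * (2 * real l + 1) / (real n + 2 * real l)"
      using Suc by simp
    also have "\<dots> = real n * (\<Prod>m<Suc l. (2 * real m + 1) / (real n + 2 * real m))"
      by simp
    finally show ?case .
  qed
  then show ?thesis using l by (simp add: mu_def)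
next
  case False then show ?thesis by (simp add: mu_def)
qed

lemma Lf_bound:
  assumes "degree p \<le> D"
  shows "Lf n p = (\<Sum>j\<le>D. coeff p j * mu n j)"
  unfolding Lf_def
  by (rule sum.mono_neutral_left) (use assms in \<open>auto simp: coeff_eq_0\<close>)

lemma Lf_add: "Lf n (p + q) = Lf n p + Lf n q"
proof -
  let ?D = "max (degree p) (degree q)"
  have "degree (p + q) \<le> ?D" by (simp add: degree_add_le)
  then show ?thesis
    by (simp add: Lf_bound[of _ ?D] sum.distrib algebra_simps)
qed

lemma Lf_smult: "Lf n (smult c p) = c * Lf n p"
  by (simp add: Lf_bound[of "smult c p" "degree p"] Lf_bound[of p "degree p"] sum_distrib_left algebra_simps degree_smult_le)

lemma Lf_minus: "Lf n (- p) = - Lf n p"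
  using Lf_smult[of n "-1" p] by simp

lemma Lf_diff: "Lf n (p - q) = Lf n p - Lf n q"
  using Lf_add[of n p "-q"] Lf_minus[of n q] by simp

lemma Lf_0[simp]: "Lf n 0 = 0" by (simp add: Lf_def)

lemma Lf_sum: "Lf n (\<Sum>i\<in>S. f i) = (\<Sum>i\<in>S. Lf n (f i))"
  by (induction S rule: infinite_finite_induct) (auto simp: Lf_add)

lemma Lf_monom: "Lf n (monom c j) = c * mu n j"
proof -
  have "Lf n (monom c j) = (\<Sum>ja\<le>j. coeff (monom c j) ja * mu n ja)"
    by (rule Lf_bound) (simp add: degree_monom_le)
  also have "\<dots> = (\<Sum>ja\<le>j. if ja = j then c * mu n ja else 0)"
    by (intro sum.cong) (auto simp: coeff_monom)
  finally show ?thesis by (simp add: sum.delta)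
qed

lemma Lf_1[simp]: "Lf n 1 = 1"
  using Lf_monom[of n 1 0] by (simp add: monom_0 one_pCons)

lemma PX_monom: "PX * monom c i = monom c (Suc i)"
  by (simp add: monom_Suc)

lemma sq_eq: "[:1,0,-1::real:] = 1 - monom 1 2"
  by (simp add: monom_Suc numeral_2_eq_2 one_pCons)

lemma sq_monom: "[:1,0,-1:] * monom (c::real) i = monom c i - monom c (Suc (Suc i))"
  unfolding sq_eq by (simp add: algebra_simps mult_monom)

lemma pderiv_sum': "pderiv (\<Sum>i\<in>S. f i) = (\<Sum>i\<in>S. pderiv (f i))"
  by (induction S rule: infinite_finite_induct) (auto simp: pderiv_add)

lemma Lf_IBP:
  assumes "n \<ge> 1"
  shows "Lf n ([:1,0,-1:] * pderiv p) = (real n - 1) * Lf n (PX * p)"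
proof -
  have mon: "Lf n ([:1,0,-1:] * pderiv (monom c i)) = (real n - 1) * Lf n (PX * monom c i)" for c i
  proof (cases i)
    case 0 then show ?thesis unfolding 0 PX_monom by (simp add: pderiv_monom Lf_monom)
  next
    case (Suc j)
    have "Lf n ([:1,0,-1:] * pderiv (monom c i)) = (real j + 1) * c * (mu n j - mu n (Suc (Suc j)))"
      unfolding Suc pderiv_monom sq_monom by (simp add: Lf_diff Lf_monom algebra_simps)
    also have "\<dots> = (real n - 1) * c * mu n (Suc (Suc j))"
      using arg_cong[OF mu_rec[OF assms, of j], of "\<lambda>t. c * t"] by (simp add: algebra_simps)
    also have "\<dots> = (real n - 1) * Lf n (PX * monom c i)"
      unfolding Suc PX_monom by (simp add: Lf_monom)
    finally show ?thesis .
  qed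
  have "Lf n ([:1,0,-1:] * pderiv p) = Lf n ([:1,0,-1:] * pderiv (\<Sum>i\<le>degree p. monom (coeff p i) i))"
    by (simp add: poly_as_sum_of_monoms)
  also have "\<dots> = (\<Sum>i\<le>degree p. Lf n ([:1,0,-1:] * pderiv (monom (coeff p i) i)))"
    by (simp add: pderiv_sum' sum_distrib_left Lf_sum)
  also have "\<dots> = (\<Sum>i\<le>degree p. (real n - 1) * Lf n (PX * monom (coeff p i) i))"
    by (intro sum.cong refl mon)
  also have "\<dots> = (real n - 1) * Lf n (PX * (\<Sum>i\<le>degree p. monom (coeff p i) i))"
    by (simp add: sum_distrib_left Lf_sum)
  finally show ?thesis by (simp add: poly_as_sum_of_monoms)
qed

lemma Lf_shift:
  assumes "n \<ge> 1"
  shows "Lf n ([:1,0,-1:] * p) = (real n - 1) / real n * Lf (n + 2) p"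
proof -
  have mon: "Lf n ([:1,0,-1:] * monom c i) = (real n - 1) / real n * Lf (n + 2) (monom c i)" for c i
  proof -
    have np: "real n + real i > 0" "real n > 0" using assms by auto
    have "Lf n ([:1,0,-1:] * monom c i) = c * (mu n i - mu n (Suc (Suc i)))"
      unfolding sq_monom by (simp add: Lf_diff Lf_monom algebra_simps)
    also have "mu n i - mu n (Suc (Suc i)) = mu n i * (real n - 1) / (real n + real i)"
      using mu_rec[OF assms, of i] np by (simp add: field_simps)
    also have "mu n i = (real n + real i) * mu (n + 2) i / real n"
      using mu_shift[OF assms, of i] np by (simp add: field_simps)
    finally have X: "Lf n ([:1,0,-1:] * monom c i) = c * ((real n + real i) * mu (n + 2) i / real n * (real n - 1) / (real n + real i))" .
    have "real n * real n > 0" "real i * real n \<ge> 0" using np by auto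
    then have np2: "real i * real n + real n * real n \<noteq> 0" "real n \<noteq> 0" "real n + real i \<noteq> 0"
      using np by linarith+
    show ?thesis unfolding X Lf_monom using np2 by (simp add: field_simps)
  qed
  have "Lf n ([:1,0,-1:] * p) = Lf n ([:1,0,-1:] * (\<Sum>i\<le>degree p. monom (coeff p i) i))"
    by (simp add: poly_as_sum_of_monoms)
  also have "\<dots> = (\<Sum>i\<le>degree p. (real n - 1) / real n * Lf (n + 2) (monom (coeff p i) i))"
    unfolding sum_distrib_left Lf_sum by (intro sum.cong refl mon)
  also have "\<dots> = (real n - 1) / real n * Lf (n + 2) (\<Sum>i\<le>degree p. monom (coeff p i) i)"
    by (simp add: sum_distrib_left Lf_sum)
  finally show ?thesis by (simp add: poly_as_sum_of_monoms)
qed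

lemma sum_even_odd:
  fixes x :: real
  shows "(\<Sum>i\<le>2*K. a i * (x^i + (-x)^i)) = 2 * (\<Sum>j\<le>K. a (2*j) * x^(2*j))"
proof (induction K)
  case 0 then show ?case by simp
next
  case (Suc K)
  have e: "2 * Suc K = Suc (Suc (2 * K))" by simp
  show ?case unfolding e using Suc by (simp add: algebra_simps)
qed

lemma poly_plus_neg:
  fixes p :: "real poly"
  assumes "degree p \<le> 2 * K"
  shows "poly p x + poly p (-x) = 2 * (\<Sum>j\<le>K. coeff p (2*j) * x^(2*j))"
proof -
  have pa: "poly p y = (\<Sum>i\<le>2*K. coeff p i * y^i)" for y
    unfolding poly_altdef
    by (rule sum.mono_neutral_left) (use assms in \<open>auto simp: coeff_eq_0\<close>)
  show ?thesis unfolding pa sum_even_odd[symmetric] by (simp add: sum.distrib algebra_simps)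
qed

lemma Lf_odd:
  assumes odd: "\<And>x. poly p (-x) = - poly p x"
  shows "Lf n p = 0"
proof -
  define K where "K = degree p"
  have dK: "degree p \<le> 2 * K" unfolding K_def by simp
  define E where "E = (\<Sum>j\<le>K. monom (coeff p (2*j)) (2*j))"
  have "poly E x = 0" for x
  proof -
    have "poly E x = (\<Sum>j\<le>K. coeff p (2*j) * x^(2*j))"
      unfolding E_def by (simp add: poly_sum poly_monom)
    also have "\<dots> = (poly p x + poly p (-x)) / 2" using poly_plus_neg[OF dK, of x] by simp
    finally show ?thesis using odd[of x] by simp
  qed
  then have E0: "E = 0" using poly_eq_poly_eq_iff[of E 0] by (auto simp: fun_eq_iff)
  have ce: "coeff p (2*j) = 0" if "j \<le> K" for j
  proof -
    have "coeff E (2*j) = (\<Sum>j'\<le>K. if j' = j then coeff p (2*j') else 0)"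
      unfolding E_def coeff_sum coeff_monom by (intro sum.cong) auto
    also have "\<dots> = coeff p (2*j)" using that by (simp add: sum.delta)
    finally show ?thesis using E0 by simp
  qed
  have "Lf n p = (\<Sum>i\<le>2*K. coeff p i * mu n i)" by (rule Lf_bound[OF dK])
  also have "\<dots> = 0"
  proof (intro sum.neutral ballI)
    fix i assume i: "i \<in> {..2*K}"
    show "coeff p i * mu n i = 0"
    proof (cases "even i")
      case True
      then obtain j where "i = 2 * j" by blast
      then show ?thesis using ce[of j] i by auto
    next
      case False then show ?thesis by (simp add: mu_odd)
    qed
  qed
  finally show ?thesis .
qed



declare gegen.simps(3)[simp del]

lemma Lf_gegen_step:
  assumes n2: "n \<ge> 2"
  shows "(real j + real n - 1) * (real n + real j) * Lf n (gegen n (Suc (Suc j)))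
         = real j * (real j + 1) * Lf n (gegen n j)"
proof -
  define a where "a = Lf n (gegen n j)"
  define b where "b = Lf n (PX * gegen n (Suc j))"
  define c where "c = Lf n (gegen n (Suc (Suc j)))"
  have r: "smult (real (Suc j) + real n - 2) (gegen n (Suc (Suc j))) =
         smult (2 * real (Suc j) + real n - 2) (PX * gegen n (Suc j)) - smult (real (Suc j)) (gegen n j)"
    using gegen_rec[OF n2, of "Suc j"] by simp
  have h1: "(real j + real n - 1) * c = (2 * real j + real n) * b - (real j + 1) * a"
    using arg_cong[OF r, of "Lf n"] unfolding a_def b_def c_def Lf_smult Lf_diff
    by (simp add: algebra_simps)
  have "Lf n ([:1,0,-1:] * pderiv (gegen n (Suc j))) = (real n - 1) * b"
    unfolding b_def by (rule Lf_IBP) (use n2 in auto)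
  moreover have "Lf n ([:1,0,-1:] * pderiv (gegen n (Suc j))) = (real j + 1) * (a - b)"
    unfolding gegen_R1[OF n2] a_def b_def by (simp add: Lf_smult Lf_diff)
  ultimately have h2: "(real n + real j) * b = (real j + 1) * a"
    by (simp add: algebra_simps)
  have "(real j + real n - 1) * (real n + real j) * c = (real n + real j) * ((2 * real j + real n) * b - (real j + 1) * a)"
    using h1 by simp
  also have "\<dots> = (2 * real j + real n) * ((real n + real j) * b) - (real n + real j) * (real j + 1) * a"
    by (simp add: algebra_simps)
  also have "\<dots> = real j * (real j + 1) * a"
    unfolding h2 by (simp add: algebra_simps)
  finally show ?thesis unfolding a_def c_def .
qed

lemma Lf_gegen:
  assumes n2: "n \<ge> 2" and i: "i \<ge> 1"
  shows "Lf n (gegen n i) = 0"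
  using i
proof (induction i rule: nat_less_induct)
  case (1 i)
  show ?case
  proof (cases i)
    case 0 then show ?thesis using 1 by simp
  next
    case (Suc i')
    show ?thesis
    proof (cases i')
      case 0 then show ?thesis using Suc by (simp add: Lf_bound[of _ 1])
    next
      case (Suc j)
      have pos: "(real j + real n - 1) * (real n + real j) \<noteq> 0" using n2 by auto
      have "real j * (real j + 1) * Lf n (gegen n j) = 0"
      proof (cases "j = 0")
        case False
        then have "Lf n (gegen n j) = 0" using 1 \<open>i = Suc i'\<close> Suc by auto
        then show ?thesis by simp
      qed simp
      then have "(real j + real n - 1) * (real n + real j) * Lf n (gegen n (Suc (Suc j))) = 0"
        using Lf_gegen_step[OF n2, of j] by simp
      then have "Lf n (gegen n (Suc (Suc j))) = 0" using pos by simp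
      then show ?thesis using \<open>i = Suc i'\<close> Suc by simp
    qed
  qed
qed

lemma PX_gegen:
  assumes n2: "n \<ge> 2" and i: "i \<ge> 1"
  shows "PX * gegen n i = smult ((real i + real n - 2) / (2 * real i + real n - 2)) (gegen n (Suc i))
                        + smult (real i / (2 * real i + real n - 2)) (gegen n (i - 1))"
proof -
  have pos: "2 * real i + real n - 2 > 0" using n2 i by auto
  have "smult (2 * real i + real n - 2) (PX * gegen n i) = smult (real i + real n - 2) (gegen n (Suc i)) + smult (real i) (gegen n (i - 1))"
    using gegen_rec[OF n2 i] by (simp add: algebra_simps)
  then have "smult (1 / (2 * real i + real n - 2)) (smult (2 * real i + real n - 2) (PX * gegen n i)) =
     smult (1 / (2 * real i + real n - 2)) (smult (real i + real n - 2) (gegen n (Suc i)) + smult (real i) (gegen n (i - 1)))"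
    by simp
  then show ?thesis using pos by (simp add: smult_add_right)
qed

lemma Lf_orth_aux:
  assumes n2: "n \<ge> 2"
  shows "\<forall>q i. degree q \<le> d \<longrightarrow> d < i \<longrightarrow> Lf n (q * gegen n i) = 0"
proof (induction d)
  case 0
  show ?case
  proof (intro allI impI)
    fix q :: "real poly" and i :: nat
    assume "degree q \<le> 0" "0 < i"
    then obtain c where "q = [:c:]" by (metis degree_eq_zeroE le_zero_eq)
    then show "Lf n (q * gegen n i) = 0" using Lf_gegen[OF n2, of i] \<open>0 < i\<close> by (simp add: Lf_smult)
  qed
next
  case (Suc d)
  show ?case
  proof (intro allI impI)
    fix q :: "real poly" and i :: nat
    assume dq: "degree q \<le> Suc d" and di: "Suc d < i"
    obtain c q1 where q: "q = pCons c q1" by (cases q) auto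
    have dq1: "degree q1 \<le> d" using dq q by (cases "q1 = 0") auto
    have qe: "q * gegen n i = smult c (gegen n i) + q1 * (PX * gegen n i)"
      unfolding q by (simp add: algebra_simps)
    have i1: "i \<ge> 1" using di by simp
    have "Lf n (q1 * (PX * gegen n i)) =
       (real i + real n - 2) / (2 * real i + real n - 2) * Lf n (q1 * gegen n (Suc i))
       + real i / (2 * real i + real n - 2) * Lf n (q1 * gegen n (i - 1))"
      unfolding PX_gegen[OF n2 i1] by (simp add: algebra_simps Lf_add Lf_smult)
    also have "\<dots> = 0" using Suc dq1 di by auto
    finally show "Lf n (q * gegen n i) = 0"
      unfolding qe using Lf_gegen[OF n2 i1] by (simp add: Lf_add Lf_smult)
  qed
qed

lemma Lf_orth:
  assumes n2: "n \<ge> 2" and "degree q < i"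
  shows "Lf n (q * gegen n i) = 0"
  using Lf_orth_aux[OF n2, of "degree q"] assms by auto

lemma Lf_orth2:
  assumes n2: "n \<ge> 2" and "i \<noteq> j"
  shows "Lf n (gegen n i * gegen n j) = 0"
proof (cases "i < j")
  case True
  then show ?thesis using Lf_orth[OF n2, of "gegen n i" j] gegen_deg_lc[OF n2, of i] by simp
next
  case False
  then have "j < i" using assms by simp
  then show ?thesis using Lf_orth[OF n2, of "gegen n j" i] gegen_deg_lc[OF n2, of j] by (simp add: mult.commute)
qed

definition rho :: "nat \<Rightarrow> nat \<Rightarrow> real" where "rho n i = Lf n (gegen n i * gegen n i)"

lemma rho_0: "rho n 0 = 1" by (simp add: rho_def)
lemma rho_1: "rho n 1 = 1 / real n"
proof -
  have "PX * PX = monom 1 2" by (simp add: monom_Suc numeral_2_eq_2)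
  then show ?thesis by (simp add: rho_def Lf_monom mu_2)
qed

lemma rho_step:
  assumes n2: "n \<ge> 2" and j: "j \<ge> 1"
  shows "rho n (Suc j) * (real j + real n - 2) * (2 * real j + real n) = (2 * real j + real n - 2) * (real j + 1) * rho n j"
proof -
  define W where "W = Lf n (PX * gegen n j * gegen n (Suc j))"
  have r1: "smult (real j + real n - 2) (gegen n (Suc j)) =
         smult (2 * real j + real n - 2) (PX * gegen n j) - smult (real j) (gegen n (j - 1))"
    using gegen_rec[OF n2 j] .
  have o1: "Lf n (gegen n (j - 1) * gegen n (Suc j)) = 0" using Lf_orth2[OF n2, of "j - 1" "Suc j"] by simp
  have "(real j + real n - 2) * rho n (Suc j) = (2 * real j + real n - 2) * W - real j * Lf n (gegen n (j - 1) * gegen n (Suc j))"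
    using arg_cong[OF r1, of "\<lambda>p. Lf n (p * gegen n (Suc j))"] unfolding rho_def W_def
    unfolding mult_smult_left left_diff_distrib Lf_smult Lf_diff by (simp add: algebra_simps)
  then have e1: "(real j + real n - 2) * rho n (Suc j) = (2 * real j + real n - 2) * W" using o1 by simp
  have r2: "smult (real (Suc j) + real n - 2) (gegen n (Suc (Suc j))) =
         smult (2 * real (Suc j) + real n - 2) (PX * gegen n (Suc j)) - smult (real (Suc j)) (gegen n j)"
    using gegen_rec[OF n2, of "Suc j"] by simp
  have o2: "Lf n (gegen n (Suc (Suc j)) * gegen n j) = 0" using Lf_orth2[OF n2, of "Suc (Suc j)" j] by simp
  have "(real j + real n - 1) * Lf n (gegen n (Suc (Suc j)) * gegen n j) = (2 * real j + real n) * W - (real j + 1) * rho n j"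
    using arg_cong[OF r2, of "\<lambda>p. Lf n (p * gegen n j)"] unfolding rho_def W_def
    unfolding mult_smult_left left_diff_distrib Lf_smult Lf_diff by (simp add: algebra_simps)
  then have e2: "(2 * real j + real n) * W = (real j + 1) * rho n j" using o2 by simp
  have "rho n (Suc j) * (real j + real n - 2) * (2 * real j + real n) = (2 * real j + real n - 2) * ((2 * real j + real n) * W)"
    using arg_cong[OF e1, of "\<lambda>t. t * (2 * real j + real n)"] by (simp add: algebra_simps)
  also have "\<dots> = (2 * real j + real n - 2) * (real j + 1) * rho n j" unfolding e2 by simp
  finally show ?thesis .
qed



definition H :: "nat \<Rightarrow> nat \<Rightarrow> real" where "H n r = real ((n + r - 1) choose r)"
definition Dn :: "nat \<Rightarrow> nat \<Rightarrow> real" where "Dn n i = H n i - (if i \<ge> 2 then H n (i - 2) else 0)"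

lemma H_0[simp]: "H n 0 = 1" by (simp add: H_def)
lemma H_1: "n \<ge> 1 \<Longrightarrow> H n 1 = real n" by (simp add: H_def)

lemma H_Suc:
  assumes "n \<ge> 1"
  shows "(real r + 1) * H n (Suc r) = (real n + real r) * H n r"
proof -
  define m where "m = n + r - 1"
  have m: "n + r - 1 = m" "n + Suc r - 1 = Suc m" "n + r = Suc m" using assms unfolding m_def by auto
  have eq: "real (Suc r) * real (Suc m choose Suc r) = real (Suc m) * real (m choose r)"
    using arg_cong[OF Suc_times_binomial[of r m], of real] by (simp only: of_nat_mult)
  have e1: "real n + real r = real (Suc m)" using m(3) by (metis of_nat_add)
  have e2: "real r + 1 = real (Suc r)" by simp
  show ?thesis unfolding H_def m(1) m(2) e1 e2 by (rule eq)
qed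

lemma H_pos: "n \<ge> 1 \<Longrightarrow> H n r > 0"
  unfolding H_def by (simp add: zero_less_binomial)

lemma H_strict: assumes "n \<ge> 2" shows "H n r < H n (Suc r)"
proof -
  have h: "(real r + 1) * H n (Suc r) = (real n + real r) * H n r" using H_Suc[of n r] assms by simp
  have p: "H n r > 0" using H_pos[of n r] assms by simp
  have "(real r + 1) * H n r < (real n + real r) * H n r" using p assms by (intro mult_strict_right_mono) auto
  then have "(real r + 1) * H n r < (real r + 1) * H n (Suc r)" using h by simp
  then show ?thesis by (simp add: mult_less_cancel_left_pos add_pos_nonneg)
qed

lemma H_mono: assumes "n \<ge> 2" "r \<le> s" shows "H n r \<le> H n s"
  using assms(2)
proof (induction s)
  case 0 then show ?case by simp
next
  case (Suc s)
  then show ?case using H_strict[OF assms(1), of s] by (cases "r = Suc s") auto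
qed

lemma Dn_pos: assumes "n \<ge> 2" shows "Dn n i > 0"
proof (cases "i \<ge> 2")
  case True
  then obtain k where k: "i = Suc (Suc k)" by (metis add_2_eq_Suc le_Suc_ex)
  have "H n k < H n (Suc (Suc k))" using H_strict[OF assms, of k] H_strict[OF assms, of "Suc k"] by simp
  then show ?thesis unfolding Dn_def k by simp
next
  case False
  then show ?thesis unfolding Dn_def using H_pos[of n i] assms by simp
qed

lemma Dn_ident:
  assumes n2: "n \<ge> 2" and J: "J \<ge> 1"
  shows "Dn n (Suc J) * (2 * real J + real n - 2) * (real J + 1) = Dn n J * (real J + real n - 2) * (2 * real J + real n)"
proof (cases "J = 1")
  case True
  have h2: "2 * H n 2 = (real n + 1) * real n" using H_Suc[of n 1] H_1[of n] n2 by (simp add: numeral_2_eq_2)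
  have e2: "Dn n (Suc 1) = (real n + 1) * real n / 2 - 1"
    unfolding Dn_def using h2 by (simp add: numeral_2_eq_2[symmetric] field_simps)
  have e1: "Dn n 1 = real n" unfolding Dn_def using H_1[of n] n2 by auto
  show ?thesis unfolding True e2 e1 by (simp add: field_simps)
next
  case False
  then obtain K where K: "J = Suc (Suc K)" using J by (metis One_nat_def Suc_le_D le_SucE le_zero_eq not0_implies_Suc)
  define Y where "Y = H n K"
  have n1: "n \<ge> 1" using n2 by simp
  have a1: "H n (Suc K) = (real n + real K) / (real K + 1) * Y" using H_Suc[OF n1, of K] unfolding Y_def by (simp add: field_simps)
  have a2: "H n (Suc (Suc K)) = (real n + real K + 1) / (real K + 2) * H n (Suc K)" using H_Suc[OF n1, of "Suc K"] by (simp add: field_simps)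
  have a3: "H n (Suc (Suc (Suc K))) = (real n + real K + 2) / (real K + 3) * H n (Suc (Suc K))" using H_Suc[OF n1, of "Suc (Suc K)"] by (simp add: field_simps)
  have d1: "Dn n (Suc J) = H n (Suc (Suc (Suc K))) - H n (Suc K)" unfolding Dn_def K by simp
  have d2: "Dn n J = H n (Suc (Suc K)) - Y" unfolding Dn_def K Y_def by simp
  define k where "k = real K"
  define a where "a = real n"
  have kp: "k + 1 > 0" "k + 2 > 0" "k + 3 > 0" unfolding k_def by auto
  define u where "u = Y / ((k + 1) * (k + 2) * (k + 3))"
  have pn: "(k + 1) * (k + 2) * (k + 3) \<noteq> 0" using kp by simp
  have y: "Y = (k + 1) * (k + 2) * (k + 3) * u" unfolding u_def using pn by simp
  have b1: "H n (Suc K) = (a + k) * (k + 2) * (k + 3) * u" unfolding a1 y a_def[symmetric] k_def[symmetric] using kp by (simp add: field_simps)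
  have b2: "H n (Suc (Suc K)) = (a + k + 1) * (a + k) * (k + 3) * u" unfolding a2 b1 a_def[symmetric] k_def[symmetric] using kp by (simp add: field_simps)
  have b3: "H n (Suc (Suc (Suc K))) = (a + k + 2) * (a + k + 1) * (a + k) * u" unfolding a3 b2 a_def[symmetric] k_def[symmetric] using kp by (simp add: field_simps)
  have rJ: "real J = k + 2" unfolding K k_def by simp
  show ?thesis unfolding d1 d2 b3 b1 b2 rJ a_def[symmetric] y by (simp add: algebra_simps)
qed

lemma rho_Dn:
  assumes n2: "n \<ge> 2"
  shows "rho n i * Dn n i = 1"
proof (cases i)
  case 0 then show ?thesis by (simp add: rho_0 Dn_def)
next
  case (Suc i')
  have "rho n (Suc j) * Dn n (Suc j) = 1" for j
  proof (induction j)
    case 0 then show ?case using rho_1 H_1[of n] n2 by (simp add: Dn_def)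
  next
    case (Suc j)
    define J where "J = Suc j"
    have J1: "J \<ge> 1" unfolding J_def by simp
    have st: "rho n (Suc J) * (real J + real n - 2) * (2 * real J + real n) = (2 * real J + real n - 2) * (real J + 1) * rho n J"
      by (rule rho_step[OF n2 J1])
    have IH: "rho n J * Dn n J = 1" using Suc unfolding J_def .
    have pos: "(real J + real n - 2) * (2 * real J + real n) > 0" using n2 J1 by (intro mult_pos_pos) auto
    have "(rho n (Suc J) * Dn n (Suc J)) * ((real J + real n - 2) * (2 * real J + real n))
        = Dn n (Suc J) * ((2 * real J + real n - 2) * (real J + 1)) * rho n J"
      using arg_cong[OF st, of "\<lambda>t. t * Dn n (Suc J)"] by (simp add: algebra_simps)
    also have "\<dots> = Dn n J * (real J + real n - 2) * (2 * real J + real n) * rho n J"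
      using arg_cong[OF Dn_ident[OF n2 J1], of "\<lambda>t. t * rho n J"] by (simp add: algebra_simps)
    also have "\<dots> = (real J + real n - 2) * (2 * real J + real n) * (rho n J * Dn n J)"
      by (simp add: algebra_simps)
    also have "\<dots> = (real J + real n - 2) * (2 * real J + real n)"
      using IH by simp
    finally have "(rho n (Suc J) * Dn n (Suc J)) * ((real J + real n - 2) * (2 * real J + real n)) = 1 * ((real J + real n - 2) * (2 * real J + real n))" by simp
    then show ?case using pos unfolding J_def by (metis mult_right_cancel less_irrefl)
  qed
  then show ?thesis using Suc by simp
qed

lemma rho_pos: assumes "n \<ge> 2" shows "rho n i > 0"
proof -
  have "rho n i = 1 / Dn n i" using rho_Dn[OF assms, of i] Dn_pos[OF assms, of i] by (simp add: field_simps)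
  then show ?thesis using Dn_pos[OF assms, of i] by simp
qed



lemma deg_drop:
  fixes q :: "real poly"
  assumes "degree q \<le> Suc d" "coeff q (Suc d) = 0"
  shows "degree q \<le> d"
proof (rule ccontr)
  assume "\<not> degree q \<le> d"
  then have "degree q = Suc d" using assms(1) by simp
  then have "q = 0" using assms(2) leading_coeff_0_iff by metis
  then show False using \<open>degree q = Suc d\<close> by simp
qed

lemma gegen_expand:
  assumes n2: "n \<ge> 2"
  shows "degree p \<le> d \<Longrightarrow> \<exists>a. p = (\<Sum>i\<le>d. smult (a i) (gegen n i))"
proof (induction d arbitrary: p)
  case 0
  then obtain c where "p = [:c:]" by (metis degree_eq_zeroE le_zero_eq)
  then show ?case by (intro exI[of _ "\<lambda>_. c"]) simp
next
  case (Suc d)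
  define \<alpha> where "\<alpha> = coeff p (Suc d) / coeff (gegen n (Suc d)) (Suc d)"
  have lc: "coeff (gegen n (Suc d)) (Suc d) > 0" "degree (gegen n (Suc d)) = Suc d"
    using gegen_deg_lc[OF n2, of "Suc d"] by auto
  define p' where "p' = p - smult \<alpha> (gegen n (Suc d))"
  have "degree p' \<le> Suc d" unfolding p'_def
    by (rule degree_diff_le) (use Suc.prems lc in \<open>auto intro: order.trans[OF degree_smult_le]\<close>)
  moreover have "coeff p' (Suc d) = 0" unfolding p'_def \<alpha>_def using lc by simp
  ultimately have "degree p' \<le> d" by (rule deg_drop)
  then obtain a where a: "p' = (\<Sum>i\<le>d. smult (a i) (gegen n i))" using Suc.IH by blast
  define b where "b = a(Suc d := \<alpha>)"
  have "(\<Sum>i\<le>Suc d. smult (b i) (gegen n i)) = (\<Sum>i\<le>d. smult (a i) (gegen n i)) + smult \<alpha> (gegen n (Suc d))"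
  proof -
    have "(\<Sum>i\<le>d. smult (b i) (gegen n i)) = (\<Sum>i\<le>d. smult (a i) (gegen n i))"
      by (intro sum.cong refl) (simp add: b_def)
    then show ?thesis unfolding sum.atMost_Suc by (simp add: b_def)
  qed
  also have "\<dots> = p" using a unfolding p'_def by simp
  finally show ?case by metis
qed

lemma Lf_expand_mult:
  assumes n2: "n \<ge> 2" and p: "p = (\<Sum>i\<le>d. smult (a i) (gegen n i))" and k: "k \<le> d"
  shows "Lf n (gegen n k * p) = a k * rho n k"
proof -
  have "Lf n (gegen n k * p) = (\<Sum>i\<le>d. a i * Lf n (gegen n k * gegen n i))"
    unfolding p sum_distrib_left Lf_sum by (simp add: Lf_smult)
  also have "\<dots> = (\<Sum>i\<le>d. if i = k then a k * rho n k else 0)"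
    by (intro sum.cong refl) (auto simp: rho_def Lf_orth2[OF n2])
  also have "\<dots> = a k * rho n k" using k by simp
  finally show ?thesis .
qed

lemma Lf_expand_sq:
  assumes n2: "n \<ge> 2" and p: "p = (\<Sum>i\<le>d. smult (a i) (gegen n i))"
  shows "Lf n (p * p) = (\<Sum>i\<le>d. (a i)^2 * rho n i)"
proof -
  have "Lf n (p * p) = (\<Sum>i\<le>d. a i * Lf n (gegen n i * p))"
    by (subst (1) p) (simp add: sum_distrib_right Lf_sum Lf_smult)
  also have "\<dots> = (\<Sum>i\<le>d. (a i)^2 * rho n i)"
    by (intro sum.cong refl) (simp add: Lf_expand_mult[OF n2 p] power2_eq_square)
  finally show ?thesis .
qed

lemma Lf_sq_nonneg:
  assumes n2: "n \<ge> 2"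
  shows "Lf n (p * p) \<ge> 0"
proof -
  obtain a where p: "p = (\<Sum>i\<le>degree p. smult (a i) (gegen n i))" using gegen_expand[OF n2, of p "degree p"] by auto
  show ?thesis unfolding Lf_expand_sq[OF n2 p] using rho_pos[OF n2] by (intro sum_nonneg) (simp add: less_imp_le)
qed

lemma Lf_wsq_nonneg:
  assumes n2: "n \<ge> 2"
  shows "Lf n ([:1,0,-1:] * (p * p)) \<ge> 0"
proof -
  have "Lf (n + 2) (p * p) \<ge> 0" using Lf_sq_nonneg[of "n+2" p] n2 by simp
  moreover have "(real n - 1) / real n \<ge> 0" using n2 by simp
  moreover have "Lf n ([:1,0,-1:] * (p * p)) = (real n - 1) / real n * Lf (n + 2) (p * p)"
    by (rule Lf_shift) (use n2 in simp)
  ultimately show ?thesis by (metis mult_nonneg_nonneg)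
qed

lemma Dn_sum:
  assumes n2: "n \<ge> 2"
  shows "(\<Sum>i\<in>{i. i \<le> r \<and> even (i + r)}. Dn n i) = H n r"
proof -
  have "(\<Sum>i\<in>{i. i \<le> r \<and> even (i + r)}. Dn n i) = H n r \<and>
        (\<Sum>i\<in>{i. i \<le> Suc r \<and> even (i + Suc r)}. Dn n i) = H n (Suc r)" for r
  proof (induction r)
    case 0
    have s0: "{i. i \<le> 0 \<and> even (i + 0)} = {0::nat}" by auto
    have s1: "{i. i \<le> Suc 0 \<and> even (i + Suc 0)} = {Suc 0}" by (auto simp: le_Suc_eq)
    show ?case unfolding s0 s1 using H_1[of n] n2 by (simp add: Dn_def)
  next
    case (Suc r)
    have s: "{i. i \<le> Suc (Suc r) \<and> even (i + Suc (Suc r))} = insert (Suc (Suc r)) {i. i \<le> r \<and> even (i + r)}"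
      by (auto simp: le_Suc_eq)
    have "(\<Sum>i\<in>{i. i \<le> Suc (Suc r) \<and> even (i + Suc (Suc r))}. Dn n i) = Dn n (Suc (Suc r)) + H n r"
      unfolding s using Suc.IH by (subst sum.insert) auto
    also have "\<dots> = H n (Suc (Suc r))" by (simp add: Dn_def)
    finally show ?case using Suc.IH by simp
  qed
  then show ?thesis by blast
qed

lemma christoffel:
  assumes n2: "n \<ge> 2"
    and par: "\<And>x. poly p (-x) = (-1)^r * poly p x"
    and dp: "degree p \<le> r"
  shows "(poly p 1)^2 \<le> H n r * Lf n (p * p)"
proof -
  obtain a where p: "p = (\<Sum>i\<le>r. smult (a i) (gegen n i))" using gegen_expand[OF n2 dp] by auto
  define S where "S = {i. i \<le> r \<and> even (i + r)}"
  have S_sub: "S \<subseteq> {..r}" unfolding S_def by auto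
  have fin: "finite S" using S_sub finite_subset by blast
  have az: "a i = 0" if "i \<le> r" "i \<notin> S" for i
  proof -
    have odd: "odd (i + r)" using that unfolding S_def by auto
    have "Lf n (gegen n i * p) = 0"
    proof (rule Lf_odd)
      fix x
      have "poly (gegen n i * p) (-x) = (-1)^(i + r) * poly (gegen n i * p) x"
        using gegen_neg[OF n2, of i x] par[of x] by (simp add: power_add)
      then show "poly (gegen n i * p) (- x) = - poly (gegen n i * p) x" using odd by simp
    qed
    then have "a i * rho n i = 0" using Lf_expand_mult[OF n2 p that(1)] by simp
    then show ?thesis using rho_pos[OF n2, of i] by simp
  qed
  have p1: "poly p 1 = (\<Sum>i\<in>S. a i)"
  proof -
    have "poly p 1 = (\<Sum>i\<le>r. a i)" unfolding p by (simp add: poly_sum gegen_at1[OF n2])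
    also have "\<dots> = (\<Sum>i\<in>S. a i)"
      by (rule sum.mono_neutral_right) (use S_sub az in auto)
    finally show ?thesis .
  qed
  have L: "Lf n (p * p) = (\<Sum>i\<in>S. (a i)^2 * rho n i)"
  proof -
    have "Lf n (p * p) = (\<Sum>i\<le>r. (a i)^2 * rho n i)" by (rule Lf_expand_sq[OF n2 p])
    also have "\<dots> = (\<Sum>i\<in>S. (a i)^2 * rho n i)"
      by (rule sum.mono_neutral_right) (use S_sub az in auto)
    finally show ?thesis .
  qed
  have rp: "rho n i > 0" for i using rho_pos[OF n2] .
  have rnz: "rho n i \<noteq> 0" "sqrt (rho n i) \<noteq> 0" "rho n i \<ge> 0" for i using rp[of i] by auto
  have "(\<Sum>i\<in>S. a i)^2 = (\<Sum>i\<in>S. (a i * sqrt (rho n i)) * (1 / sqrt (rho n i)))^2"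
    by (intro arg_cong[where f = "\<lambda>t. t^2"] sum.cong refl) (simp add: rnz)
  also have "\<dots> \<le> (\<Sum>i\<in>S. (a i * sqrt (rho n i))^2) * (\<Sum>i\<in>S. (1 / sqrt (rho n i))^2)"
    by (rule Cauchy_Schwarz_ineq_sum)
  also have "(\<Sum>i\<in>S. (a i * sqrt (rho n i))^2) = Lf n (p * p)"
    unfolding L by (intro sum.cong refl) (simp add: power_mult_distrib rnz)
  also have "(\<Sum>i\<in>S. (1 / sqrt (rho n i))^2) = (\<Sum>i\<in>S. Dn n i)"
  proof (intro sum.cong refl)
    fix i
    have "rho n i * Dn n i = 1" by (rule rho_Dn[OF n2])
    then show "(1 / sqrt (rho n i))^2 = Dn n i" using rp[of i] by (simp add: power_divide less_imp_le field_simps)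
  qed
  also have "\<dots> = H n r" unfolding S_def by (rule Dn_sum[OF n2])
  finally show ?thesis unfolding p1 by (simp add: mult.commute)
qed



declare mult_pCons_left[simp del] mult_pCons_right[simp del]

inductive PO :: "nat \<Rightarrow> real poly \<Rightarrow> bool" for k where
  PO0: "PO k 0"
| POadd: "PO k a \<Longrightarrow> PO k b \<Longrightarrow> PO k (a + b)"
| POsq: "2 * degree q \<le> k \<Longrightarrow> PO k (q * q)"
| POs: "2 * degree q + 1 \<le> k \<Longrightarrow> PO k (PX * (q * q))"
| POt: "2 * degree q + 1 \<le> k \<Longrightarrow> PO k ([:1,-1:] * (q * q))"
| POst: "2 * degree q + 2 \<le> k \<Longrightarrow> PO k (PX * ([:1,-1:] * (q * q)))"

lemma PO_mono: "PO k h \<Longrightarrow> k \<le> k' \<Longrightarrow> PO k' h"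
  by (induction rule: PO.induct) (auto intro: PO.intros)

lemma deg_lin: "degree ([:a, b:] * q) \<le> Suc (degree (q::real poly))"
  using degree_mult_le[of "[:a,b:]" q] by (cases "b = 0") auto

lemma PO_mulX: "PO k h \<Longrightarrow> PO (Suc k) (PX * h)"
proof (induction rule: PO.induct)
  case PO0 then show ?case by (simp add: PO.PO0)
next
  case (POadd a b) then show ?case by (simp add: distrib_left PO.POadd)
next
  case (POsq q) then show ?case by (intro PO.POs) simp
next
  case (POs q)
  have e: "PX * (PX * (q * q)) = (PX * q) * (PX * q)" by (simp only: ac_simps)
  show ?case unfolding e by (rule PO.POsq) (use POs deg_lin[of 0 1 q] in simp)
next
  case (POt q) then show ?case by (intro PO.POst) simp
next
  case (POst q)
  have e: "PX * (PX * ([:1,-1:] * (q * q))) = [:1,-1:] * ((PX * q) * (PX * q))" by (simp only: ac_simps)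
  show ?case unfolding e by (rule PO.POt) (use POst deg_lin[of 0 1 q] in simp)
qed

lemma PO_mulT: "PO k h \<Longrightarrow> PO (Suc k) ([:1,-1:] * h)"
proof (induction rule: PO.induct)
  case PO0 then show ?case by (simp add: PO.PO0)
next
  case (POadd a b) then show ?case by (simp add: distrib_left PO.POadd)
next
  case (POsq q) then show ?case by (intro PO.POt) simp
next
  case (POs q)
  have e: "[:1,-1:] * (PX * (q * q)) = PX * ([:1,-1:] * (q * q))" by (simp only: ac_simps)
  show ?case unfolding e by (rule PO.POst) (use POs in simp)
next
  case (POt q)
  have e: "[:1,-1:] * ([:1,-1:] * (q * q)) = ([:1,-1:] * q) * ([:1,-1:] * q)" by (simp only: ac_simps)
  show ?case unfolding e by (rule PO.POsq) (use POt deg_lin[of 1 "-1" q] in simp)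
next
  case (POst q)
  have e: "[:1,-1:] * (PX * ([:1,-1:] * (q * q))) = PX * (([:1,-1:] * q) * ([:1,-1:] * q))" by (simp only: ac_simps)
  show ?case unfolding e by (rule PO.POs) (use POst deg_lin[of 1 "-1" q] in simp)
qed

lemma PO_mulR: "PO k h \<Longrightarrow> PO (Suc (Suc k)) ([:-r,1:] * [:-r,1:] * h)"
proof (induction rule: PO.induct)
  case PO0 then show ?case by (simp add: PO.PO0)
next
  case (POadd a b) then show ?case by (simp add: distrib_left PO.POadd)
next
  case (POsq q)
  have e: "[:-r,1:] * [:-r,1:] * (q * q) = ([:-r,1:] * q) * ([:-r,1:] * q)" by (simp only: ac_simps)
  show ?case unfolding e by (rule PO.POsq) (use POsq deg_lin[of "-r" 1 q] in simp)
next
  case (POs q)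
  have e: "[:-r,1:] * [:-r,1:] * (PX * (q * q)) = PX * (([:-r,1:] * q) * ([:-r,1:] * q))" by (simp only: ac_simps)
  show ?case unfolding e by (rule PO.POs) (use POs deg_lin[of "-r" 1 q] in simp)
next
  case (POt q)
  have e: "[:-r,1:] * [:-r,1:] * ([:1,-1:] * (q * q)) = [:1,-1:] * (([:-r,1:] * q) * ([:-r,1:] * q))" by (simp only: ac_simps)
  show ?case unfolding e by (rule PO.POt) (use POt deg_lin[of "-r" 1 q] in simp)
next
  case (POst q)
  have e: "[:-r,1:] * [:-r,1:] * (PX * ([:1,-1:] * (q * q))) = PX * ([:1,-1:] * (([:-r,1:] * q) * ([:-r,1:] * q)))" by (simp only: ac_simps)
  show ?case unfolding e by (rule PO.POst) (use POst deg_lin[of "-r" 1 q] in simp)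
qed

lemma poly_pos_nbhd:
  fixes q :: "real poly"
  assumes "poly q r > 0"
  shows "\<exists>d>0. \<forall>s. \<bar>s - r\<bar> < d \<longrightarrow> poly q s > 0"
proof -
  have "(poly q \<longlongrightarrow> poly q r) (at r)" by (rule isContD) simp
  then have "eventually (\<lambda>s. poly q s > 0) (at r)" using assms order_tendstoD(1) by blast
  then obtain d where d: "d > 0" "\<forall>s. s \<noteq> r \<and> dist s r < d \<longrightarrow> poly q s > 0"
    unfolding eventually_at by auto
  show ?thesis using d assms by (intro exI[of _ d]) (auto simp: dist_real_def)
qed

lemma nonneg_closure:
  fixes q :: "real poly"
  assumes h: "\<forall>s\<in>{0..1}. s \<noteq> r \<longrightarrow> poly q s \<ge> 0" and r: "r \<in> {0..1}"
  shows "poly q r \<ge> 0"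
proof (rule ccontr)
  assume "\<not> poly q r \<ge> 0"
  then have "poly (-q) r > 0" by simp
  then obtain d where d: "d > 0" "\<forall>s. \<bar>s - r\<bar> < d \<longrightarrow> poly (-q) s > 0" using poly_pos_nbhd by blast
  show False
  proof (cases "r < 1")
    case True
    define s where "s = r + min (d/2) (1 - r)"
    have "s \<in> {0..1}" "s \<noteq> r" "\<bar>s - r\<bar> < d" unfolding s_def using True d r by auto
    then show False using h d(2) by force
  next
    case False
    define s where "s = r - min (d/2) 1"
    have "s \<in> {0..1}" "s \<noteq> r" "\<bar>s - r\<bar> < d" unfolding s_def using False d r by auto
    then show False using h d(2) by force
  qed
qed



declare mult_pCons_left[simp del] mult_pCons_right[simp del]

lemma const_sq: "c \<ge> 0 \<Longrightarrow> [:c:] = [:sqrt c:] * [:sqrt (c::real):]"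
  by (simp add: mult_pCons_left)

lemma pos_mult_nonneg: "(a::real) > 0 \<Longrightarrow> a * b \<ge> 0 \<Longrightarrow> b \<ge> 0"
  by (simp add: zero_le_mult_iff)

lemma nonneg_closure':
  fixes q :: "real poly"
  assumes "\<forall>s\<in>{0..1}. s \<noteq> r \<longrightarrow> poly q s \<ge> 0" "r \<in> {0..1}"
  shows "\<forall>s\<in>{0..1}. poly q s \<ge> 0"
proof
  fix s :: real assume s: "s \<in> {0..1}"
  show "poly q s \<ge> 0"
  proof (cases "s = r")
    case True then show ?thesis using nonneg_closure[OF assms] by simp
  next
    case False then show ?thesis using assms(1) s by blast
  qed
qed

lemma decomp:
  fixes h :: "real poly"
  shows "degree h = d \<Longrightarrow> (\<forall>s\<in>{0..1}. poly h s \<ge> 0) \<Longrightarrow> PO d h"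
proof (induction d arbitrary: h rule: less_induct)
  case (less d)
  note deg = less.prems(1) and nn = less.prems(2)
  show ?case
  proof (cases "d = 0")
    case True
    then obtain c where hc: "h = [:c:]" using deg by (metis degree_eq_zeroE)
    have "poly h 0 \<ge> 0" using nn by simp
    then have c0: "c \<ge> 0" using hc by simp
    have e: "h = [:sqrt c:] * [:sqrt c:]" unfolding hc by (rule const_sq[OF c0])
    have "PO d ([:sqrt c:] * [:sqrt c:])" by (rule PO.POsq) simp
    then show ?thesis using e by simp
  next
    case False
    have "\<exists>x\<in>{0..1::real}. \<forall>y\<in>{0..1}. poly h x \<le> poly h y"
      by (rule continuous_attains_inf) (auto intro: continuous_intros)
    then obtain r where r: "r \<in> {0..1}" "\<forall>y\<in>{0..1}. poly h r \<le> poly h y" by blast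
    define l where "l = poly h r"
    have l0: "l \<ge> 0" using nn r(1) unfolding l_def by blast
    define h' where "h' = h - [:l:]"
    have h'r: "poly h' r = 0" unfolding h'_def l_def by simp
    have h'nn: "\<forall>s\<in>{0..1}. poly h' s \<ge> 0" unfolding h'_def l_def using r(2) by simp
    have hnz: "h \<noteq> 0" using False deg by auto
    have "coeff h' d = coeff h d" unfolding h'_def using False by (cases d) auto
    moreover have "coeff h d \<noteq> 0"
    proof -
      have "coeff h (degree h) \<noteq> 0" using hnz by simp
      then show ?thesis using deg by simp
    qed
    moreover have "degree h' \<le> d" unfolding h'_def using deg by (intro degree_diff_le) auto
    ultimately have dh': "degree h' = d" by (metis le_antisym le_degree)
    have "[:-r,1:] dvd h'" using h'r poly_eq_0_iff_dvd by blast
    then obtain h1 where h1: "h' = [:-r,1:] * h1" by (elim dvdE)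
    have h1nz: "h1 \<noteq> 0" using h1 dh' False by auto
    have dh1: "degree h1 = d - 1" using dh' h1 h1nz by (simp add: degree_mult_eq)
    have hs: "h = [:l:] + h'" unfolding h'_def by simp
    have "PO d ([:sqrt l:] * [:sqrt l:])" by (rule PO.POsq) simp
    then have Pl: "PO d [:l:]" by (subst const_sq[OF l0])
    have ph': "poly h' s = (s - r) * poly h1 s" for s unfolding h1 by simp
    have Ph': "PO d h'"
    proof -
      consider "r = 0" | "r = 1" | "0 < r \<and> r < 1" using r(1) by (cases "r = 0"; cases "r = 1") auto
      then show ?thesis
      proof cases
        case 1
        have "\<forall>s\<in>{0..1}. s \<noteq> r \<longrightarrow> poly h1 s \<ge> 0"
        proof (intro ballI impI)
          fix s :: real assume s: "s \<in> {0..1}" "s \<noteq> r"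
          then have "s > 0" using 1 by auto
          moreover have "poly h' s \<ge> 0" using h'nn s(1) by blast
          then have "s * poly h1 s \<ge> 0" using ph'[of s] 1 by simp
          ultimately show "poly h1 s \<ge> 0" by (rule pos_mult_nonneg)
        qed
        then have "\<forall>s\<in>{0..1}. poly h1 s \<ge> 0" using nonneg_closure' r(1) by blast
        then have "PO (d - 1) h1" using less.IH[of "d - 1" h1] dh1 False by simp
        then have "PO (Suc (d - 1)) (PX * h1)" by (rule PO_mulX)
        then show ?thesis using h1 1 False by simp
      next
        case 2
        have "\<forall>s\<in>{0..1}. s \<noteq> r \<longrightarrow> poly (-h1) s \<ge> 0"
        proof (intro ballI impI)
          fix s :: real assume s: "s \<in> {0..1}" "s \<noteq> r"
          then have "1 - s > 0" using 2 by auto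
          moreover have "poly h' s \<ge> 0" using h'nn s(1) by blast
          then have "(1 - s) * poly (-h1) s \<ge> 0" using ph'[of s] 2 by (simp add: algebra_simps)
          ultimately show "poly (-h1) s \<ge> 0" by (rule pos_mult_nonneg)
        qed
        then have "\<forall>s\<in>{0..1}. poly (-h1) s \<ge> 0" using nonneg_closure' r(1) by blast
        then have "PO (d - 1) (-h1)" using less.IH[of "d - 1" "-h1"] dh1 False by simp
        then have "PO (Suc (d - 1)) ([:1,-1:] * (-h1))" by (rule PO_mulT)
        moreover have "[:1,-1:] * (-h1) = h'" unfolding h1 2 by (simp add: mult_pCons_left)
        ultimately show ?thesis using False by simp
      next
        case 3
        have h1r: "poly h1 r = 0"
        proof (rule ccontr)
          assume ne: "poly h1 r \<noteq> 0"
          show False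
          proof (cases "poly h1 r > 0")
            case True
            then obtain e where e: "e > 0" "\<forall>s. \<bar>s - r\<bar> < e \<longrightarrow> poly h1 s > 0" using poly_pos_nbhd by blast
            define s where "s = r - min (e/2) r"
            have s: "s \<in> {0..1}" "s < r" "\<bar>s - r\<bar> < e" unfolding s_def using 3 e by auto
            then have "poly h1 s > 0" using e by blast
            then have "poly h' s < 0" using ph'[of s] s(2) by (simp add: mult_neg_pos)
            moreover have "poly h' s \<ge> 0" using h'nn s(1) by blast
            ultimately show False by simp
          next
            case False
            then have "poly (-h1) r > 0" using ne by simp
            then obtain e where e: "e > 0" "\<forall>s. \<bar>s - r\<bar> < e \<longrightarrow> poly (-h1) s > 0" using poly_pos_nbhd by blast
            define s where "s = r + min (e/2) (1 - r)"
            have s: "s \<in> {0..1}" "s > r" "\<bar>s - r\<bar> < e" unfolding s_def using 3 e by auto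
            then have "poly (-h1) s > 0" using e by blast
            then have "poly h1 s < 0" by simp
            then have "poly h' s < 0" using ph'[of s] s(2) by (simp add: mult_pos_neg)
            moreover have "poly h' s \<ge> 0" using h'nn s(1) by blast
            ultimately show False by simp
          qed
        qed
        have "[:-r,1:] dvd h1" using h1r poly_eq_0_iff_dvd by blast
        then obtain h2 where h2: "h1 = [:-r,1:] * h2" by (elim dvdE)
        have h2nz: "h2 \<noteq> 0" using h2 h1nz by auto
        have dh2: "degree h2 = d - 2" using dh1 h2 h2nz by (simp add: degree_mult_eq)
        have d2: "d \<ge> 2" using dh1 h2 h2nz by (simp add: degree_mult_eq)
        have ph2: "poly h' s = (s - r)^2 * poly h2 s" for s unfolding h1 h2 by (simp add: power2_eq_square)
        have "\<forall>s\<in>{0..1}. s \<noteq> r \<longrightarrow> poly h2 s \<ge> 0"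
        proof (intro ballI impI)
          fix s :: real assume s: "s \<in> {0..1}" "s \<noteq> r"
          then have "(s - r)^2 > 0" by simp
          moreover have "poly h' s \<ge> 0" using h'nn s(1) by blast
          then have "(s - r)^2 * poly h2 s \<ge> 0" using ph2[of s] by simp
          ultimately show "poly h2 s \<ge> 0" by (rule pos_mult_nonneg)
        qed
        then have "\<forall>s\<in>{0..1}. poly h2 s \<ge> 0" using nonneg_closure' r(1) by blast
        then have "PO (d - 2) h2" using less.IH[of "d - 2" h2] dh2 False by simp
        then have "PO (Suc (Suc (d - 2))) ([:-r,1:] * [:-r,1:] * h2)" by (rule PO_mulR)
        moreover have "[:-r,1:] * [:-r,1:] * h2 = h'" unfolding h1 h2 by (simp add: mult.assoc)
        moreover have "Suc (Suc (d - 2)) = d" using d2 by simp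
        ultimately show ?thesis by simp
      qed
    qed
    show ?thesis unfolding hs by (rule PO.POadd[OF Pl Ph'])
  qed
qed



declare mult_pCons_left[simp del] mult_pCons_right[simp del]

abbreviation "TT \<equiv> [:0, 0, 1::real:]"

lemma poly_ext: "(\<And>x. poly p x = poly q x) \<Longrightarrow> p = (q :: real poly)"
  using poly_eq_poly_eq_iff[of p q] by blast

lemma poly_TT[simp]: "poly TT x = x^2"
  by (simp add: power2_eq_square)

lemma PO_bound:
  assumes n2: "n \<ge> 2"
  shows "PO k h \<Longrightarrow> poly h 1 \<le> H n k * Lf n (h \<circ>\<^sub>p TT)"
proof (induction rule: PO.induct)
  case PO0 then show ?case by simp
next
  case (POadd a b)
  then show ?case by (simp add: pcompose_add Lf_add distrib_left)
next
  case (POsq q)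
  define p where "p = q \<circ>\<^sub>p TT"
  have e: "(q * q) \<circ>\<^sub>p TT = p * p" unfolding p_def by (simp add: pcompose_mult)
  define r where "r = 2 * (k div 2)"
  have "2 * degree q \<le> 2 * (k div 2)" using POsq by presburger
  then have dp: "degree p \<le> r" unfolding p_def r_def by (simp add: degree_pcompose)
  have par: "poly p (-x) = (-1)^r * poly p x" for x unfolding p_def r_def by (simp add: poly_pcompose)
  have rk: "r \<le> k" unfolding r_def by simp
  have "(poly p 1)^2 \<le> H n r * Lf n (p * p)" by (rule christoffel[OF n2 par dp])
  also have "\<dots> \<le> H n k * Lf n (p * p)"
    by (rule mult_right_mono[OF H_mono[OF n2 rk] Lf_sq_nonneg[OF n2]])
  finally show ?case unfolding e using poly_pcompose[of q TT 1] by (simp add: p_def power2_eq_square poly_pcompose)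
next
  case (POs q)
  define p where "p = PX * (q \<circ>\<^sub>p TT)"
  have e: "(PX * (q * q)) \<circ>\<^sub>p TT = p * p" unfolding p_def
    by (rule poly_ext) (simp add: poly_pcompose power2_eq_square)
  define r where "r = 2 * ((k - 1) div 2) + 1"
  have dp: "degree p \<le> r"
  proof -
    have "degree p \<le> Suc (degree (q \<circ>\<^sub>p TT))" unfolding p_def by (rule deg_lin)
    also have "\<dots> = Suc (2 * degree q)" by (simp add: degree_pcompose)
    also have "\<dots> \<le> r" unfolding r_def using POs by simp
    finally show ?thesis .
  qed
  have par: "poly p (-x) = (-1)^r * poly p x" for x unfolding p_def r_def by (simp add: poly_pcompose)
  have rk: "r \<le> k" unfolding r_def using POs by simp
  have "(poly p 1)^2 \<le> H n r * Lf n (p * p)" by (rule christoffel[OF n2 par dp])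
  also have "\<dots> \<le> H n k * Lf n (p * p)"
    by (rule mult_right_mono[OF H_mono[OF n2 rk] Lf_sq_nonneg[OF n2]])
  finally show ?case unfolding e by (simp add: p_def power2_eq_square poly_pcompose)
next
  case (POt q)
  define p where "p = q \<circ>\<^sub>p TT"
  have e: "([:1,-1:] * (q * q)) \<circ>\<^sub>p TT = [:1,0,-1:] * (p * p)" unfolding p_def
    by (rule poly_ext) (simp add: poly_pcompose power2_eq_square)
  have "0 \<le> H n k * Lf n ([:1,0,-1:] * (p * p))"
    using H_pos[of n k] n2 Lf_wsq_nonneg[OF n2, of p] by simp
  then show ?case unfolding e by simp
next
  case (POst q)
  define p where "p = PX * (q \<circ>\<^sub>p TT)"
  have e: "(PX * ([:1,-1:] * (q * q))) \<circ>\<^sub>p TT = [:1,0,-1:] * (p * p)" unfolding p_def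
    by (rule poly_ext) (simp add: poly_pcompose power2_eq_square)
  have "0 \<le> H n k * Lf n ([:1,0,-1:] * (p * p))"
    using H_pos[of n k] n2 Lf_wsq_nonneg[OF n2, of p] by simp
  then show ?case unfolding e by simp
qed

theorem mainTheorem4:
  fixes n k m :: nat and c :: "nat \<Rightarrow> real"
  assumes "n \<ge> 2" and "k \<ge> 1"
    and "in_M n k m c"
    and "degree (gegen_sum n m c) \<le> 2 * k"
  shows "poly (gegen_sum n m c) 1 / c 0 \<le> real ((n + k - 1) choose k)"
proof -
  note n2 = assms(1)
  define f where "f = gegen_sum n m c"
  have inF: "in_F n k m c" and fnn: "\<forall>t\<in>{-1..1}. poly f t \<ge> 0"
    using assms(3) unfolding in_M_def f_def by auto
  have c0: "c 0 > 0" using inF unfolding in_F_def by simp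
  have df: "degree f \<le> 2 * k" using assms(4) unfolding f_def .
  have Lff: "Lf n f = c 0"
  proof -
    have "Lf n f = (\<Sum>i\<le>m. c i * Lf n (gegen n i))"
      unfolding f_def gegen_sum_def Lf_sum by (simp add: Lf_smult)
    also have "\<dots> = (\<Sum>i\<le>m. if i = 0 then c 0 else 0)"
      by (intro sum.cong refl) (auto simp: Lf_gegen[OF n2])
    also have "\<dots> = c 0" by simp
    finally show ?thesis .
  qed
  have f1: "poly f 1 = (\<Sum>i\<le>m. c i)"
    unfolding f_def gegen_sum_def by (simp add: poly_sum gegen_at1[OF n2])
  have fm1: "poly f (-1) = (\<Sum>i\<le>m. c i * (-1)^i)"
    unfolding f_def gegen_sum_def by (simp add: poly_sum gegen_neg[OF n2] gegen_at1[OF n2])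
  have ff: "poly f 1 \<le> poly f (-1)"
  proof -
    have "poly f 1 - poly f (-1) = (\<Sum>i\<le>m. c i * (1 - (-1)^i))"
      unfolding f1 fm1 by (simp add: sum_subtractf algebra_simps)
    also have "\<dots> \<le> 0"
    proof (rule sum_nonpos)
      fix i assume i: "i \<in> {..m}"
      show "c i * (1 - (-1)^i) \<le> 0"
      proof (cases "even i")
        case True then show ?thesis by simp
      next
        case False
        then have "i \<le> 2 * k - 1 \<or> 2 * k + 1 \<le> i" by presburger
        then have "c i \<le> 0" using inF i False unfolding in_F_def by auto
        then show ?thesis using False by simp
      qed
    qed
    finally show ?thesis by simp
  qed
  define h where "h = (\<Sum>j\<le>k. monom (coeff f (2*j)) j)"
  have ph: "poly h (x^2) = (poly f x + poly f (-x)) / 2" for x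
  proof -
    have "poly h (x^2) = (\<Sum>j\<le>k. coeff f (2*j) * x^(2*j))"
      unfolding h_def by (simp add: poly_sum poly_monom power_mult)
    then show ?thesis using poly_plus_neg[OF df, of x] by simp
  qed
  have hnn: "\<forall>s\<in>{0..1}. poly h s \<ge> 0"
  proof
    fix s :: real assume s: "s \<in> {0..1}"
    define x where "x = sqrt s"
    have "0 \<le> x" "x \<le> 1" unfolding x_def using s by auto
    then have x: "x \<in> {-1..1}" "-x \<in> {-1..1}" by auto
    have "poly h s = poly h (x^2)" unfolding x_def using s by simp
    also have "\<dots> = (poly f x + poly f (-x)) / 2" by (rule ph)
    also have "\<dots> \<ge> 0" using fnn x by (simp add: add_nonneg_nonneg)
    finally show "poly h s \<ge> 0" .
  qed
  have dh: "degree h \<le> k" unfolding h_def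
    by (rule degree_sum_le) (auto intro: order.trans[OF degree_monom_le])
  have "PO (degree h) h" by (rule decomp[OF refl hnn])
  then have POh: "PO k h" using PO_mono dh by blast
  have bound: "poly h 1 \<le> H n k * Lf n (h \<circ>\<^sub>p TT)" by (rule PO_bound[OF n2 POh])
  have "Lf n (f - h \<circ>\<^sub>p TT) = 0"
  proof (rule Lf_odd)
    fix x
    have a: "poly (h \<circ>\<^sub>p TT) x = (poly f x + poly f (-x)) / 2"
      using ph[of x] by (simp add: poly_pcompose power2_eq_square)
    have b: "poly (h \<circ>\<^sub>p TT) (-x) = (poly f x + poly f (-x)) / 2"
      using ph[of x] by (simp add: poly_pcompose power2_eq_square)
    show "poly (f - h \<circ>\<^sub>p TT) (- x) = - poly (f - h \<circ>\<^sub>p TT) x"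
      unfolding poly_diff a b by (simp add: field_simps)
  qed
  then have Lh: "Lf n (h \<circ>\<^sub>p TT) = c 0" using Lff by (simp add: Lf_diff)
  have h1: "poly h 1 = (poly f 1 + poly f (-1)) / 2" using ph[of 1] by simp
  have "poly f 1 \<le> H n k * c 0" using bound Lh h1 ff by simp
  then have "poly f 1 / c 0 \<le> H n k" using c0 by (simp add: pos_divide_le_eq)
  then show ?thesis unfolding f_def H_def .
qed


end
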